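(* Let $(X,\sigma,\tau)$ be a separable, chronologically dense Lorentzian metric space satisfying the S-property, with c-completion $\overline X$. If $a,b,c\in\overline X$ satisfy $a\,\overline{\ll}\,b\,\overline{\ll}\,c$, then $\overline{\tau}(a,c)\geq\overline{\tau}(a,b)+\overline{\tau}(b,c)$.
   Context: A Lorentzian metric space $(X,\sigma,\tau)$ is a topological space with $\tau:X\times X\to[0,\infty]$ lower semicontinuous and satisfying $\tau(x,z)\geq\tau(x,y)+\tau(y,z)$ whenever $\tau(x,y),\tau(y,z)>0$. Write $x\ll y$ iff $\tau(x,y)>0$, $I^+(x)=\{y:x\ll y\}$, $I^-(x)=\{y:y\ll x\}$, $I^\pm[A]=\bigcup_{a\in A}I^\pm(a)$. Future (resp. past) chain: $x_n\ll x_{n+1}$ (resp. $x_{n+1}\ll x_n$) for all $n$. Separable: there is a countable $S$ with $x\ll y\Rightarrow\exists s\in S$, $x\ll s\ll y$. Chronologically dense: every $x$ with $I^-(x)\neq\emptyset$ (resp. $I^+(x)\neq\emptyset$) is the $\sigma$-limit of a future (resp. past) chain. Past set: $P=I^-[P]$; $\downarrow S=I^-[\{p:p\ll q\ \forall q\in S\}]$; IP: past set not the union of two proper past subsets; PIP: IP of the form $I^-(p)$; future sets, $\uparrow S$, IF, PIF dually. For nonempty IP $P$ and IF $F$, $P\sim_S F$ iff $P$ is a maximal IP in $\downarrow F$ and $F$ a maximal IF in $\uparrow P$; $P\sim_S\emptyset$ (resp. $\emptyset\sim_S F$) if the nonempty $P$ (resp. $F$) is S-related to no nonempty IF (resp.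 IP). S-property: for every $x$, $I^-(x)\sim_S I^+(x)$, and no PIF other than $I^+(x)$ (resp. PIP other than $I^-(x)$) is S-related to $I^-(x)$ (resp. $I^+(x)$). c-completion $\overline X=\{(P,F):P\sim_S F\}$. $\overline\tau((P,F),(P',F'))=0$ if $F=\emptyset$ or $P'=\emptyset$, and otherwise $\lim_n\tau(q_n,p'_n)$ for any past chain $\{q_n\}$ with $I^+[\{q_n\}]=F$ and future chain $\{p'_n\}$ with $I^-[\{p'_n\}]=P'$ (well defined). $a\,\overline\ll\,b$ iff $\overline\tau(a,b)>0$. *)

theory Defs
  imports Complex_Main "HOL-Library.Extended_Nonnegative_Real"
begin

definition tau_lsc :: "('a::topological_space \<Rightarrow> 'a \<Rightarrow> ennreal) \<Rightarrow> bool" where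
  "tau_lsc \<tau> \<longleftrightarrow> (\<forall>x y. \<forall>r < \<tau> x y. \<forall>\<^sub>F p in nhds (x, y). r < \<tau> (fst p) (snd p))"

definition lorentzian_metric_space :: "('a::topological_space \<Rightarrow> 'a \<Rightarrow> ennreal) \<Rightarrow> bool" where
  "lorentzian_metric_space \<tau> \<longleftrightarrow> tau_lsc \<tau> \<and>
     (\<forall>x y z. \<tau> x y > 0 \<and> \<tau> y z > 0 \<longrightarrow> \<tau> x z \<ge> \<tau> x y + \<tau> y z)"

definition chron :: "('a \<Rightarrow> 'a \<Rightarrow> ennreal) \<Rightarrow> 'a \<Rightarrow> 'a \<Rightarrow> bool" where
  "chron \<tau> x y \<longleftrightarrow> \<tau> x y > 0"

definition Ifut :: "('a \<Rightarrow> 'a \<Rightarrow> ennreal) \<Rightarrow> 'a \<Rightarrow> 'a set" where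
  "Ifut \<tau> x = {y. chron \<tau> x y}"

definition Ipast :: "('a \<Rightarrow> 'a \<Rightarrow> ennreal) \<Rightarrow> 'a \<Rightarrow> 'a set" where
  "Ipast \<tau> x = {y. chron \<tau> y x}"

definition IfutS :: "('a \<Rightarrow> 'a \<Rightarrow> ennreal) \<Rightarrow> 'a set \<Rightarrow> 'a set" where
  "IfutS \<tau> A = (\<Union>a\<in>A. Ifut \<tau> a)"

definition IpastS :: "('a \<Rightarrow> 'a \<Rightarrow> ennreal) \<Rightarrow> 'a set \<Rightarrow> 'a set" where
  "IpastS \<tau> A = (\<Union>a\<in>A. Ipast \<tau> a)"

definition future_chain :: "('a \<Rightarrow> 'a \<Rightarrow> ennreal) \<Rightarrow> (nat \<Rightarrow> 'a) \<Rightarrow> bool" where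
  "future_chain \<tau> x \<longleftrightarrow> (\<forall>n. chron \<tau> (x n) (x (Suc n)))"

definition past_chain :: "('a \<Rightarrow> 'a \<Rightarrow> ennreal) \<Rightarrow> (nat \<Rightarrow> 'a) \<Rightarrow> bool" where
  "past_chain \<tau> x \<longleftrightarrow> (\<forall>n. chron \<tau> (x (Suc n)) (x n))"

definition separable_lms :: "('a \<Rightarrow> 'a \<Rightarrow> ennreal) \<Rightarrow> bool" where
  "separable_lms \<tau> \<longleftrightarrow> (\<exists>S. countable S \<and>
     (\<forall>x y. chron \<tau> x y \<longrightarrow> (\<exists>s\<in>S. chron \<tau> x s \<and> chron \<tau> s y)))"

definition chron_dense :: "('a::topological_space \<Rightarrow> 'a \<Rightarrow> ennreal) \<Rightarrow> bool" where
  "chron_dense \<tau> \<longleftrightarrow>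
     (\<forall>x. Ipast \<tau> x \<noteq> {} \<longrightarrow> (\<exists>s. future_chain \<tau> s \<and> s \<longlonglongrightarrow> x)) \<and>
     (\<forall>x. Ifut \<tau> x \<noteq> {} \<longrightarrow> (\<exists>s. past_chain \<tau> s \<and> s \<longlonglongrightarrow> x))"

definition past_set :: "('a \<Rightarrow> 'a \<Rightarrow> ennreal) \<Rightarrow> 'a set \<Rightarrow> bool" where
  "past_set \<tau> P \<longleftrightarrow> P = IpastS \<tau> P"

definition future_set :: "('a \<Rightarrow> 'a \<Rightarrow> ennreal) \<Rightarrow> 'a set \<Rightarrow> bool" where
  "future_set \<tau> F \<longleftrightarrow> F = IfutS \<tau> F"

definition down :: "('a \<Rightarrow> 'a \<Rightarrow> ennreal) \<Rightarrow> 'a set \<Rightarrow> 'a set" where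
  "down \<tau> S = IpastS \<tau> {p. \<forall>q\<in>S. chron \<tau> p q}"

definition up :: "('a \<Rightarrow> 'a \<Rightarrow> ennreal) \<Rightarrow> 'a set \<Rightarrow> 'a set" where
  "up \<tau> S = IfutS \<tau> {p. \<forall>q\<in>S. chron \<tau> q p}"

definition IP :: "('a \<Rightarrow> 'a \<Rightarrow> ennreal) \<Rightarrow> 'a set \<Rightarrow> bool" where
  "IP \<tau> P \<longleftrightarrow> past_set \<tau> P \<and>
     \<not> (\<exists>P1 P2. past_set \<tau> P1 \<and> past_set \<tau> P2 \<and> P1 \<subset> P \<and> P2 \<subset> P \<and> P = P1 \<union> P2)"

definition IF :: "('a \<Rightarrow> 'a \<Rightarrow> ennreal) \<Rightarrow> 'a set \<Rightarrow> bool" where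
  "IF \<tau> F \<longleftrightarrow> future_set \<tau> F \<and>
     \<not> (\<exists>F1 F2. future_set \<tau> F1 \<and> future_set \<tau> F2 \<and> F1 \<subset> F \<and> F2 \<subset> F \<and> F = F1 \<union> F2)"

definition maximal_IP_in :: "('a \<Rightarrow> 'a \<Rightarrow> ennreal) \<Rightarrow> 'a set \<Rightarrow> 'a set \<Rightarrow> bool" where
  "maximal_IP_in \<tau> P A \<longleftrightarrow> IP \<tau> P \<and> P \<subseteq> A \<and>
     (\<forall>P'. IP \<tau> P' \<and> P \<subseteq> P' \<and> P' \<subseteq> A \<longrightarrow> P' = P)"

definition maximal_IF_in :: "('a \<Rightarrow> 'a \<Rightarrow> ennreal) \<Rightarrow> 'a set \<Rightarrow> 'a set \<Rightarrow> bool" where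
  "maximal_IF_in \<tau> F A \<longleftrightarrow> IF \<tau> F \<and> F \<subseteq> A \<and>
     (\<forall>F'. IF \<tau> F' \<and> F \<subseteq> F' \<and> F' \<subseteq> A \<longrightarrow> F' = F)"

definition S_rel_ne :: "('a \<Rightarrow> 'a \<Rightarrow> ennreal) \<Rightarrow> 'a set \<Rightarrow> 'a set \<Rightarrow> bool" where
  "S_rel_ne \<tau> P F \<longleftrightarrow> P \<noteq> {} \<and> F \<noteq> {} \<and> IP \<tau> P \<and> IF \<tau> F \<and>
     maximal_IP_in \<tau> P (down \<tau> F) \<and> maximal_IF_in \<tau> F (up \<tau> P)"

definition S_rel :: "('a \<Rightarrow> 'a \<Rightarrow> ennreal) \<Rightarrow> 'a set \<Rightarrow> 'a set \<Rightarrow> bool" where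
  "S_rel \<tau> P F \<longleftrightarrow>
     (if P \<noteq> {} \<and> F \<noteq> {} then S_rel_ne \<tau> P F
      else if P \<noteq> {} \<and> F = {} then IP \<tau> P \<and> (\<forall>F'. \<not> S_rel_ne \<tau> P F')
      else if P = {} \<and> F \<noteq> {} then IF \<tau> F \<and> (\<forall>P'. \<not> S_rel_ne \<tau> P' F)
      else False)"

definition S_property :: "('a \<Rightarrow> 'a \<Rightarrow> ennreal) \<Rightarrow> bool" where
  "S_property \<tau> \<longleftrightarrow> (\<forall>x. S_rel \<tau> (Ipast \<tau> x) (Ifut \<tau> x) \<and>
     (\<forall>y. IF \<tau> (Ifut \<tau> y) \<and> S_rel \<tau> (Ipast \<tau> x) (Ifut \<tau> y) \<longrightarrow> Ifut \<tau> y = Ifut \<tau> x) \<and>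
     (\<forall>y. IP \<tau> (Ipast \<tau> y) \<and> S_rel \<tau> (Ipast \<tau> y) (Ifut \<tau> x) \<longrightarrow> Ipast \<tau> y = Ipast \<tau> x))"

definition c_completion :: "('a \<Rightarrow> 'a \<Rightarrow> ennreal) \<Rightarrow> ('a set \<times> 'a set) set" where
  "c_completion \<tau> = {(P, F). S_rel \<tau> P F}"

text \<open>Extended time separation on the c-completion: the common limit of
  tau(q_n, p'_n) over all past chains q generating F and future chains p' generating P'
  (well defined by the paper).\<close>
definition tau_bar :: "('a \<Rightarrow> 'a \<Rightarrow> ennreal) \<Rightarrow> ('a set \<times> 'a set) \<Rightarrow> ('a set \<times> 'a set) \<Rightarrow> ennreal" where
  "tau_bar \<tau> a b =
     (if snd a = {} \<or> fst b = {} then 0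
      else (THE L. \<forall>q p. past_chain \<tau> q \<and> IfutS \<tau> (range q) = snd a \<and>
                          future_chain \<tau> p \<and> IpastS \<tau> (range p) = fst b \<longrightarrow>
                          (\<lambda>n. \<tau> (q n) (p n)) \<longlonglongrightarrow> L))"

end

theory Submission
  imports Defs
begin

lemma pastS_past:
  assumes tr: "\<And>x y z. chron \<tau> x y \<Longrightarrow> chron \<tau> y z \<Longrightarrow> chron \<tau> x z"
    and ip: "\<And>x y. chron \<tau> x y \<Longrightarrow> \<exists>s. chron \<tau> x s \<and> chron \<tau> s y"
  shows "past_set \<tau> (IpastS \<tau> A)"
  unfolding past_set_def IpastS_def Ipast_def
  using tr ip by auto blast

lemma ip_directed:
  assumes tr: "\<And>x y z. chron \<tau> x y \<Longrightarrow> chron \<tau> y z \<Longrightarrow> chron \<tau> x z"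
    and ipl: "\<And>x y. chron \<tau> x y \<Longrightarrow> \<exists>s. chron \<tau> x s \<and> chron \<tau> s y"
    and IPP: "IP \<tau> P" and xP: "x \<in> P" and yP: "y \<in> P"
  shows "\<exists>z\<in>P. chron \<tau> x z \<and> chron \<tau> y z"
proof -
  have ps: "P = IpastS \<tau> P" using IPP unfolding IP_def past_set_def by blast
  define P1 where "P1 = IpastS \<tau> (Ifut \<tau> x \<inter> P)"
  define P2 where "P2 = IpastS \<tau> (P - P1)"
  have sub: "IpastS \<tau> B \<subseteq> P" if "B \<subseteq> P" for B
  proof
    fix w assume "w \<in> IpastS \<tau> B"
    then have "w \<in> IpastS \<tau> P" using that unfolding IpastS_def by blast
    then show "w \<in> P" using ps by simp
  qed
  have s1: "P1 \<subseteq> P" unfolding P1_def by (rule sub) blast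
  have s2: "P2 \<subseteq> P" unfolding P2_def by (rule sub) blast
  have p1: "past_set \<tau> P1" unfolding P1_def by (rule pastS_past[OF tr ipl])
  have p2: "past_set \<tau> P2" unfolding P2_def by (rule pastS_past[OF tr ipl])
  have un: "P = P1 \<union> P2"
  proof
    show "P \<subseteq> P1 \<union> P2"
    proof
      fix w assume w: "w \<in> P"
      then obtain r where r: "r \<in> P" "chron \<tau> w r" using ps unfolding IpastS_def Ipast_def by blast
      show "w \<in> P1 \<union> P2"
      proof (cases "r \<in> P1")
        case True
        then obtain z where "z \<in> Ifut \<tau> x \<inter> P" "chron \<tau> r z" unfolding P1_def IpastS_def Ipast_def by blast
        then have "w \<in> P1" using tr[OF r(2)] unfolding P1_def IpastS_def Ipast_def by blast
        then show ?thesis by blast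
      next
        case False
        then have "w \<in> P2" using r unfolding P2_def IpastS_def Ipast_def by blast
        then show ?thesis by blast
      qed
    qed
  qed (use s1 s2 in blast)
  have "\<not> (P1 \<subset> P \<and> P2 \<subset> P)" using IPP p1 p2 un unfolding IP_def by blast
  then have "P1 = P \<or> P2 = P" using s1 s2 by blast
  then show ?thesis
  proof
    assume "P1 = P"
    then have "y \<in> P1" using yP by simp
    then show ?thesis unfolding P1_def IpastS_def Ipast_def Ifut_def by blast
  next
    assume "P2 = P"
    then have "x \<in> P2" using xP by simp
    then obtain r where r: "r \<in> P" "r \<notin> P1" "chron \<tau> x r" unfolding P2_def IpastS_def Ipast_def by blast
    then obtain r' where r': "r' \<in> P" "chron \<tau> r r'" using ps unfolding IpastS_def Ipast_def by blast
    have "chron \<tau> x r'" using tr r r' by blast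
    then have "r \<in> P1" using r' unfolding P1_def IpastS_def Ipast_def Ifut_def by blast
    then show ?thesis using r by blast
  qed
qed

lemma ip_chain:
  assumes tr: "\<And>x y z. chron \<tau> x y \<Longrightarrow> chron \<tau> y z \<Longrightarrow> chron \<tau> x z"
    and sep: "separable_lms \<tau>" and IPP: "IP \<tau> P" and ne: "P \<noteq> {}"
  shows "\<exists>p. future_chain \<tau> p \<and> IpastS \<tau> (range p) = P"
proof -
  obtain S where S: "countable S" "\<And>x y. chron \<tau> x y \<Longrightarrow> \<exists>s\<in>S. chron \<tau> x s \<and> chron \<tau> s y"
    using sep unfolding separable_lms_def by blast
  have ipl: "\<And>x y. chron \<tau> x y \<Longrightarrow> \<exists>s. chron \<tau> x s \<and> chron \<tau> s y" using S(2) by blast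
  have ps: "P = IpastS \<tau> P" using IPP unfolding IP_def past_set_def by blast
  define E where "E = S \<inter> P"
  have PE: "P \<subseteq> IpastS \<tau> E"
  proof
    fix w assume w: "w \<in> P"
    then obtain r where r: "r \<in> P" "chron \<tau> w r" using ps unfolding IpastS_def Ipast_def by blast
    then obtain s where s: "s \<in> S" "chron \<tau> w s" "chron \<tau> s r" using S(2) by blast
    have "s \<in> P" using ps r s unfolding IpastS_def Ipast_def by blast
    then show "w \<in> IpastS \<tau> E" using s unfolding E_def IpastS_def Ipast_def by blast
  qed
  have Ene: "E \<noteq> {}" using PE ne unfolding IpastS_def by blast
  have Ec: "countable E" unfolding E_def using S(1) by simp
  define e where "e = from_nat_into E"
  have eE: "range e = E" unfolding e_def using range_from_nat_into[OF Ene Ec] .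
  have eP: "e n \<in> P" for n using eE unfolding E_def by blast
  have ex0: "\<exists>z. z \<in> P \<and> chron \<tau> (e 0) z"
    using eP[of 0] ps unfolding IpastS_def Ipast_def by blast
  have exS: "\<exists>z. z \<in> P \<and> chron \<tau> w z \<and> chron \<tau> (e (Suc n)) z" if "w \<in> P" for w n
  proof -
    have "\<exists>z\<in>P. chron \<tau> w z \<and> chron \<tau> (e (Suc n)) z"
      by (rule ip_directed[where \<tau>=\<tau>]) (use tr ipl IPP that eP in auto)
    then show ?thesis by blast
  qed
  define p where "p = rec_nat (SOME z. z \<in> P \<and> chron \<tau> (e 0) z)
      (\<lambda>n w. SOME z. z \<in> P \<and> chron \<tau> w z \<and> chron \<tau> (e (Suc n)) z)"
  have p0: "p 0 = (SOME z. z \<in> P \<and> chron \<tau> (e 0) z)" unfolding p_def by simp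
  have pS: "p (Suc n) = (SOME z. z \<in> P \<and> chron \<tau> (p n) z \<and> chron \<tau> (e (Suc n)) z)" for n
    unfolding p_def by simp
  have inv: "p n \<in> P \<and> chron \<tau> (e n) (p n)" for n
  proof (induction n)
    case 0
    show ?case unfolding p0 using someI_ex[OF ex0] .
  next
    case (Suc n)
    have "p (Suc n) \<in> P \<and> chron \<tau> (p n) (p (Suc n)) \<and> chron \<tau> (e (Suc n)) (p (Suc n))"
      unfolding pS using someI_ex[OF exS[OF Suc[THEN conjunct1]]] .
    then show ?case by blast
  qed
  have fc: "future_chain \<tau> p" unfolding future_chain_def
  proof
    fix n
    have "p (Suc n) \<in> P \<and> chron \<tau> (p n) (p (Suc n)) \<and> chron \<tau> (e (Suc n)) (p (Suc n))"
      unfolding pS using someI_ex[OF exS[OF inv[THEN conjunct1]]] .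
    then show "chron \<tau> (p n) (p (Suc n))" by blast
  qed
  have "IpastS \<tau> (range p) = P"
  proof
    show "IpastS \<tau> (range p) \<subseteq> P"
    proof
      fix w assume "w \<in> IpastS \<tau> (range p)"
      then have "w \<in> IpastS \<tau> P" using inv unfolding IpastS_def by blast
      then show "w \<in> P" using ps by simp
    qed
    show "P \<subseteq> IpastS \<tau> (range p)"
    proof
      fix w assume "w \<in> P"
      then obtain s where s: "s \<in> E" "chron \<tau> w s" using PE unfolding IpastS_def Ipast_def by blast
      then obtain n where "s = e n" using eE by blast
      then have "chron \<tau> w (p n)" using tr s inv by blast
      then show "w \<in> IpastS \<tau> (range p)" unfolding IpastS_def Ipast_def by blast
    qed
  qed
  then show ?thesis using fc by blast
qed

definition flip :: "('a \<Rightarrow> 'a \<Rightarrow> ennreal) \<Rightarrow> 'a \<Rightarrow> 'a \<Rightarrow> ennreal" where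
  "flip \<tau> x y = \<tau> y x"

lemma flip_chron: "chron (flip \<tau>) x y = chron \<tau> y x"
  unfolding chron_def flip_def by simp

lemma flip_IpastS: "IpastS (flip \<tau>) A = IfutS \<tau> A"
  unfolding IpastS_def IfutS_def Ipast_def Ifut_def flip_chron by simp

lemma flip_IP: "IP (flip \<tau>) F = IF \<tau> F"
  unfolding IP_def IF_def past_set_def future_set_def flip_IpastS by simp

lemma flip_sep: "separable_lms (flip \<tau>) = separable_lms \<tau>"
  unfolding separable_lms_def flip_chron by blast

lemma flip_fc: "future_chain (flip \<tau>) q = past_chain \<tau> q"
  unfolding future_chain_def past_chain_def flip_chron by simp

lemma if_chain:
  assumes tr: "\<And>x y z. chron \<tau> x y \<Longrightarrow> chron \<tau> y z \<Longrightarrow> chron \<tau> x z"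
    and sep: "separable_lms \<tau>" and IFF: "IF \<tau> F" and ne: "F \<noteq> {}"
  shows "\<exists>q. past_chain \<tau> q \<and> IfutS \<tau> (range q) = F"
proof -
  have "\<exists>p. future_chain (flip \<tau>) p \<and> IpastS (flip \<tau>) (range p) = F"
    by (rule ip_chain) (use tr sep IFF ne in \<open>auto simp: flip_chron flip_sep flip_IP\<close>)
  then show ?thesis unfolding flip_fc flip_IpastS .
qed


lemma lms_tr:
  assumes "lorentzian_metric_space \<tau>" "chron \<tau> x y" "chron \<tau> y z"
  shows "chron \<tau> x z"
proof -
  have "\<tau> x z \<ge> \<tau> x y + \<tau> y z" using assms unfolding lorentzian_metric_space_def chron_def by blast
  moreover have "\<tau> x y + \<tau> y z \<ge> \<tau> x y" by (simp add: add_increasing2)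
  ultimately show ?thesis using assms(2) unfolding chron_def by (meson less_le_trans order_trans)
qed

lemma lms_rt:
  assumes "lorentzian_metric_space \<tau>" "\<tau> x y > 0" "\<tau> y z > 0"
  shows "\<tau> x z \<ge> \<tau> x y + \<tau> y z"
  using assms unfolding lorentzian_metric_space_def by blast

lemma pc_lt:
  assumes L: "lorentzian_metric_space \<tau>" and q: "past_chain \<tau> q"
  shows "k < N \<Longrightarrow> chron \<tau> (q N) (q k)"
proof (induction N)
  case 0 then show ?case by simp
next
  case (Suc N)
  have c: "chron \<tau> (q (Suc N)) (q N)" using q unfolding past_chain_def by blast
  show ?case
  proof (cases "k = N")
    case True then show ?thesis using c by simp
  next
    case False then have "k < N" using Suc by simp
    then show ?thesis using Suc lms_tr[OF L c] by blast
  qed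
qed

lemma fc_lt:
  assumes L: "lorentzian_metric_space \<tau>" and p: "future_chain \<tau> p"
  shows "k < N \<Longrightarrow> chron \<tau> (p k) (p N)"
proof (induction N)
  case 0 then show ?case by simp
next
  case (Suc N)
  have c: "chron \<tau> (p N) (p (Suc N))" using p unfolding future_chain_def by blast
  show ?case
  proof (cases "k = N")
    case True then show ?thesis using c by simp
  next
    case False then have "k < N" using Suc by simp
    then show ?thesis using Suc lms_tr[OF L _ c] by blast
  qed
qed

lemma chain_incseq:
  assumes L: "lorentzian_metric_space \<tau>" and q: "past_chain \<tau> q" and p: "future_chain \<tau> p"
  shows "incseq (\<lambda>n. \<tau> (q n) (p n))"
proof (rule incseq_SucI)
  fix n
  show "\<tau> (q n) (p n) \<le> \<tau> (q (Suc n)) (p (Suc n))"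
  proof (cases "\<tau> (q n) (p n) > 0")
    case False then show ?thesis by simp
  next
    case True
    have c1: "\<tau> (q (Suc n)) (q n) > 0" using q unfolding past_chain_def chron_def by blast
    have c2: "\<tau> (p n) (p (Suc n)) > 0" using p unfolding future_chain_def chron_def by blast
    have h1: "\<tau> (q (Suc n)) (p n) \<ge> \<tau> (q (Suc n)) (q n) + \<tau> (q n) (p n)"
      by (rule lms_rt[OF L c1 True])
    then have h1': "\<tau> (q (Suc n)) (p n) \<ge> \<tau> (q n) (p n)" by (meson add_increasing order_trans order_refl zero_le)
    then have pos: "\<tau> (q (Suc n)) (p n) > 0" using True by (meson less_le_trans)
    have "\<tau> (q (Suc n)) (p (Suc n)) \<ge> \<tau> (q (Suc n)) (p n) + \<tau> (p n) (p (Suc n))"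
      by (rule lms_rt[OF L pos c2])
    then have "\<tau> (q (Suc n)) (p (Suc n)) \<ge> \<tau> (q (Suc n)) (p n)" by (meson add_increasing2 order_trans order_refl zero_le)
    then show ?thesis using h1' by simp
  qed
qed

lemma range_pc:
  assumes "past_chain \<tau> q" shows "q m \<in> IfutS \<tau> (range q)"
  using assms unfolding past_chain_def IfutS_def Ifut_def by blast

lemma range_fc:
  assumes "future_chain \<tau> p" shows "p m \<in> IpastS \<tau> (range p)"
  using assms unfolding future_chain_def IpastS_def Ipast_def by blast

lemma chain_compare:
  assumes L: "lorentzian_metric_space \<tau>"
    and q: "past_chain \<tau> q" and p: "future_chain \<tau> p"
    and q': "past_chain \<tau> q'" and p': "future_chain \<tau> p'"
    and eq: "IfutS \<tau> (range q') = IfutS \<tau> (range q)"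
    and ep: "IpastS \<tau> (range p') = IpastS \<tau> (range p)"
  shows "\<tau> (q' m) (p' m) \<le> (SUP n. \<tau> (q n) (p n))"
proof (cases "\<tau> (q' m) (p' m) > 0")
  case False then show ?thesis by simp
next
  case True
  have "q' m \<in> IfutS \<tau> (range q)" using range_pc[OF q'] eq by simp
  then obtain k where k: "chron \<tau> (q k) (q' m)" unfolding IfutS_def Ifut_def by blast
  have "p' m \<in> IpastS \<tau> (range p)" using range_fc[OF p'] ep by simp
  then obtain j where j: "chron \<tau> (p' m) (p j)" unfolding IpastS_def Ipast_def by blast
  define N where "N = Suc (k + j)"
  have a1: "chron \<tau> (q N) (q' m)" using lms_tr[OF L pc_lt[OF L q, of k N] k] N_def by simp
  have a2: "chron \<tau> (p' m) (p N)" using lms_tr[OF L j fc_lt[OF L p, of j N]] N_def by simp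
  have h1: "\<tau> (q' m) (p N) \<ge> \<tau> (q' m) (p' m) + \<tau> (p' m) (p N)"
    by (rule lms_rt[OF L True a2[unfolded chron_def]])
  then have h1': "\<tau> (q' m) (p N) \<ge> \<tau> (q' m) (p' m)" by (meson add_increasing2 order_trans order_refl zero_le)
  then have pos: "\<tau> (q' m) (p N) > 0" using True by (meson less_le_trans)
  have "\<tau> (q N) (p N) \<ge> \<tau> (q N) (q' m) + \<tau> (q' m) (p N)"
    by (rule lms_rt[OF L a1[unfolded chron_def] pos])
  then have "\<tau> (q N) (p N) \<ge> \<tau> (q' m) (p N)" by (meson add_increasing order_trans order_refl zero_le)
  then have "\<tau> (q' m) (p' m) \<le> \<tau> (q N) (p N)" using h1' by simp
  then show ?thesis by (meson SUP_upper2 UNIV_I)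
qed

lemma tb_lim:
  assumes L: "lorentzian_metric_space \<tau>" and sep: "separable_lms \<tau>"
    and IFa: "IF \<tau> (snd a)" and nea: "snd a \<noteq> {}"
    and IPb: "IP \<tau> (fst b)" and neb: "fst b \<noteq> {}"
  shows "\<forall>q p. past_chain \<tau> q \<and> IfutS \<tau> (range q) = snd a \<and>
            future_chain \<tau> p \<and> IpastS \<tau> (range p) = fst b \<longrightarrow>
            (\<lambda>n. \<tau> (q n) (p n)) \<longlonglongrightarrow> tau_bar \<tau> a b"
proof -
  have tr: "\<And>x y z. chron \<tau> x y \<Longrightarrow> chron \<tau> y z \<Longrightarrow> chron \<tau> x z" using lms_tr[OF L] by blast
  have "\<exists>q. past_chain \<tau> q \<and> IfutS \<tau> (range q) = snd a"
    by (rule if_chain) (use tr sep IFa nea in auto)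
  then obtain q0 where q0: "past_chain \<tau> q0" "IfutS \<tau> (range q0) = snd a" by blast
  have "\<exists>p. future_chain \<tau> p \<and> IpastS \<tau> (range p) = fst b"
    by (rule ip_chain) (use tr sep IPb neb in auto)
  then obtain p0 where p0: "future_chain \<tau> p0" "IpastS \<tau> (range p0) = fst b" by blast
  define L0 where "L0 = (SUP n. \<tau> (q0 n) (p0 n))"
  let ?Q = "\<lambda>L. \<forall>q p. past_chain \<tau> q \<and> IfutS \<tau> (range q) = snd a \<and>
            future_chain \<tau> p \<and> IpastS \<tau> (range p) = fst b \<longrightarrow>
            (\<lambda>n. \<tau> (q n) (p n)) \<longlonglongrightarrow> L"
  have Q: "?Q L0"
  proof (intro allI impI)
    fix q p assume h: "past_chain \<tau> q \<and> IfutS \<tau> (range q) = snd a \<and>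
            future_chain \<tau> p \<and> IpastS \<tau> (range p) = fst b"
    have le1: "(SUP n. \<tau> (q n) (p n)) \<le> L0" unfolding L0_def
      by (rule SUP_least, rule chain_compare[OF L q0(1) p0(1)]) (use h q0 p0 in auto)
    have le2: "L0 \<le> (SUP n. \<tau> (q n) (p n))" unfolding L0_def
      by (rule SUP_least, rule chain_compare[OF L]) (use h q0 p0 in auto)
    have "(\<lambda>n. \<tau> (q n) (p n)) \<longlonglongrightarrow> (SUP n. \<tau> (q n) (p n))"
      by (rule LIMSEQ_SUP, rule chain_incseq[OF L]) (use h in auto)
    then show "(\<lambda>n. \<tau> (q n) (p n)) \<longlonglongrightarrow> L0" using le1 le2 by simp
  qed
  have "(THE L. ?Q L) = L0"
  proof (rule the_equality)
    show "?Q L0" by (rule Q)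
    fix L assume "?Q L"
    then have "(\<lambda>n. \<tau> (q0 n) (p0 n)) \<longlonglongrightarrow> L" using q0 p0 by blast
    moreover have "(\<lambda>n. \<tau> (q0 n) (p0 n)) \<longlonglongrightarrow> L0" using Q q0 p0 by blast
    ultimately show "L = L0" using LIMSEQ_unique by blast
  qed
  then have "tau_bar \<tau> a b = L0" unfolding tau_bar_def using nea neb by simp
  then show ?thesis using Q by simp
qed


lemma srel_IF: "S_rel \<tau> P F \<Longrightarrow> F \<noteq> {} \<Longrightarrow> IF \<tau> F"
  unfolding S_rel_def S_rel_ne_def by (auto split: if_splits)

lemma srel_IP: "S_rel \<tau> P F \<Longrightarrow> P \<noteq> {} \<Longrightarrow> IP \<tau> P"
  unfolding S_rel_def S_rel_ne_def by (auto split: if_splits)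

lemma srel_down: "S_rel \<tau> P F \<Longrightarrow> P \<noteq> {} \<Longrightarrow> F \<noteq> {} \<Longrightarrow> P \<subseteq> down \<tau> F"
  unfolding S_rel_def S_rel_ne_def maximal_IP_in_def by (auto split: if_splits)

lemma tb_ne: "tau_bar \<tau> a b > 0 \<Longrightarrow> snd a \<noteq> {} \<and> fst b \<noteq> {}"
  unfolding tau_bar_def by (auto split: if_splits)

theorem mainTheorem17:
  fixes \<tau> :: "'a::topological_space \<Rightarrow> 'a \<Rightarrow> ennreal"
  assumes "lorentzian_metric_space \<tau>"
    and "separable_lms \<tau>"
    and "chron_dense \<tau>"
    and "S_property \<tau>"
    and "a \<in> c_completion \<tau>" and "b \<in> c_completion \<tau>" and "c \<in> c_completion \<tau>"
    and "tau_bar \<tau> a b > 0" and "tau_bar \<tau> b c > 0"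
  shows "tau_bar \<tau> a c \<ge> tau_bar \<tau> a b + tau_bar \<tau> b c"
proof -
  note L = assms(1) and sep = assms(2)
  have tr: "\<And>x y z. chron \<tau> x y \<Longrightarrow> chron \<tau> y z \<Longrightarrow> chron \<tau> x z" using lms_tr[OF L] by blast
  have Sa: "S_rel \<tau> (fst a) (snd a)" using assms(5) unfolding c_completion_def by auto
  have Sb: "S_rel \<tau> (fst b) (snd b)" using assms(6) unfolding c_completion_def by auto
  have Sc: "S_rel \<tau> (fst c) (snd c)" using assms(7) unfolding c_completion_def by auto
  have ne1: "snd a \<noteq> {}" "fst b \<noteq> {}" using tb_ne[OF assms(8)] by auto
  have ne2: "snd b \<noteq> {}" "fst c \<noteq> {}" using tb_ne[OF assms(9)] by auto
  have IFa: "IF \<tau> (snd a)" using srel_IF[OF Sa ne1(1)] .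
  have IFb: "IF \<tau> (snd b)" using srel_IF[OF Sb ne2(1)] .
  have IPb: "IP \<tau> (fst b)" using srel_IP[OF Sb ne1(2)] .
  have IPc: "IP \<tau> (fst c)" using srel_IP[OF Sc ne2(2)] .
  have dn: "fst b \<subseteq> down \<tau> (snd b)" using srel_down[OF Sb ne1(2) ne2(1)] .
  have "\<exists>q. past_chain \<tau> q \<and> IfutS \<tau> (range q) = snd a"
    by (rule if_chain) (use tr sep IFa ne1 in auto)
  then obtain q where q: "past_chain \<tau> q" "IfutS \<tau> (range q) = snd a" by blast
  have "\<exists>q. past_chain \<tau> q \<and> IfutS \<tau> (range q) = snd b"
    by (rule if_chain) (use tr sep IFb ne2 in auto)
  then obtain q' where q': "past_chain \<tau> q'" "IfutS \<tau> (range q') = snd b" by blast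
  have "\<exists>p. future_chain \<tau> p \<and> IpastS \<tau> (range p) = fst b"
    by (rule ip_chain) (use tr sep IPb ne1 in auto)
  then obtain p' where p': "future_chain \<tau> p'" "IpastS \<tau> (range p') = fst b" by blast
  have "\<exists>p. future_chain \<tau> p \<and> IpastS \<tau> (range p) = fst c"
    by (rule ip_chain) (use tr sep IPc ne2 in auto)
  then obtain p'' where p'': "future_chain \<tau> p''" "IpastS \<tau> (range p'') = fst c" by blast
  have lab: "(\<lambda>n. \<tau> (q n) (p' n)) \<longlonglongrightarrow> tau_bar \<tau> a b"
    using tb_lim[OF L sep IFa ne1(1) IPb ne1(2)] q p' by blast
  have lbc: "(\<lambda>n. \<tau> (q' n) (p'' n)) \<longlonglongrightarrow> tau_bar \<tau> b c"
    using tb_lim[OF L sep IFb ne2(1) IPc ne2(2)] q' p'' by blast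
  have lac: "(\<lambda>n. \<tau> (q n) (p'' n)) \<longlonglongrightarrow> tau_bar \<tau> a c"
    using tb_lim[OF L sep IFa ne1(1) IPc ne2(2)] q p'' by blast
  have e1: "eventually (\<lambda>n. \<tau> (q n) (p' n) > 0) sequentially"
    using order_tendstoD(1)[OF lab assms(8)] .
  have e2: "eventually (\<lambda>n. \<tau> (q' n) (p'' n) > 0) sequentially"
    using order_tendstoD(1)[OF lbc assms(9)] .
  have mid: "chron \<tau> (p' n) (q' n)" for n
  proof -
    have "p' n \<in> fst b" using range_fc[OF p'(1)] p'(2) by simp
    then have "p' n \<in> down \<tau> (snd b)" using dn by blast
    then obtain r where r: "chron \<tau> (p' n) r" "\<forall>x\<in>snd b. chron \<tau> r x"
      unfolding down_def IpastS_def Ipast_def by blast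
    have "q' n \<in> snd b" using range_pc[OF q'(1)] q'(2) by simp
    then show ?thesis using r tr by blast
  qed
  have ev: "eventually (\<lambda>n. \<tau> (q n) (p' n) + \<tau> (q' n) (p'' n) \<le> \<tau> (q n) (p'' n)) sequentially"
    using e1 e2
  proof eventually_elim
    case (elim n)
    have m: "\<tau> (p' n) (q' n) > 0" using mid unfolding chron_def by blast
    have h1: "\<tau> (q n) (q' n) \<ge> \<tau> (q n) (p' n) + \<tau> (p' n) (q' n)"
      by (rule lms_rt[OF L elim(1) m])
    then have h1': "\<tau> (q n) (q' n) \<ge> \<tau> (q n) (p' n)" by (meson add_increasing2 order_trans order_refl zero_le)
    then have pos: "\<tau> (q n) (q' n) > 0" using elim(1) by (meson less_le_trans)
    have "\<tau> (q n) (p'' n) \<ge> \<tau> (q n) (q' n) + \<tau> (q' n) (p'' n)"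
      by (rule lms_rt[OF L pos elim(2)])
    moreover have "\<tau> (q n) (q' n) + \<tau> (q' n) (p'' n) \<ge> \<tau> (q n) (p' n) + \<tau> (q' n) (p'' n)"
      using h1' by (simp add: add_right_mono)
    ultimately show ?case by (rule order_trans[rotated])
  qed
  show ?thesis
    by (rule tendsto_le[OF _ lac tendsto_add[OF lab lbc] ev]) simp
qed

end
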